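(* In the adaptive viral marketing setting under the Independent Cascade model, the utility function $f(S,\phi)=|\{v\in E:\exists u\in S,\ \exists w\in E,\ \phi_u((w,v))=1\}|+|S|$ is worst-case monotone and worst-case submodular with respect to the induced prior $p(\phi)$, and it satisfies minimal dependency.
   Context: Adaptive viral marketing setting: $G=(E,Z)$ is a finite directed graph with node set $E$ (the items) and edge set $Z$, and each edge $(u,v)\in Z$ has a propagation probability $p(u,v)\in[0,1]$. Let $X:Z\to\{0,1\}$ be random with independent coordinates, $\Pr[X(u,v)=1]=p(u,v)$ (edge live if $1$, blocked if $0$). The state of a node $u$ is the function $\phi_u:Z\to\{0,1,?\}$ with $\phi_u((w,v))=X(w,v)$ if $w$ is reachable from $u$ by a directed path of live edges (including $w=u$), and $\phi_u((w,v))=?$ otherwise. The realization is $\phi$ with $\phi(u)=\phi_u$; its prior $p$ is the law induced by $X$, $\Phi\sim p$, $U^+=\{\phi:p(\phi)>0\}$. A partial realization is $\psi:S\to O$ with $\mathrm{dom}(\psi)=S\subseteq E$ ($O$ the set of possible states), identified with its set of pairs; $\psi\subseteq\psi'$ means $\psi'$ extends $\psi$; $\phi\sim\psi$ means agreement on $\mathrm{dom}(\psi)$; only $\psi$ with $\Pr[\Phi\sim\psi]>0$ are considered and $p(\phi\mid\psi)=\Pr[\Phi=\phi\mid\Phi\sim\psi]$. $f(S,\psi)=\mathbb{E}[f(S,\Phi)\mid\Phi\sim\psi]$. For $e\notin\mathrm{dom}(\psi)$, $O(e,\psi)=\{o:\exists\phi,\ p(\phi\mid\psi)>0,\ \phi(e)=o\}$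 and $f_{wc}(e\mid\psi)=\min_{o\in O(e,\psi)}\{f(\mathrm{dom}(\psi)\cup\{e\},\psi\cup\{(e,o)\})-f(\mathrm{dom}(\psi),\psi)\}$. $f$ is worst-case submodular if $f_{wc}(e\mid\psi)\ge f_{wc}(e\mid\psi')$ for all $\psi\subseteq\psi'$ and $e\notin\mathrm{dom}(\psi')$; worst-case monotone if $f_{wc}(e\mid\psi)\ge0$ for all $\psi$ and $e\notin\mathrm{dom}(\psi)$; $f$ satisfies minimal dependency if $f(\mathrm{dom}(\psi),\psi)=f(\mathrm{dom}(\psi),\phi)$ for all $\psi$ and all $\phi\in U^+$ with $\phi\sim\psi$. *)

theory Defs
  imports Complex_Main
begin

text \<open>Nodes have type 'a; the graph is (E, Z) with Z \<subseteq> E \<times> E; p gives propagation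
  probabilities. A live-edge outcome X : Z \<rightarrow> {0,1} is represented by the set of
  live edges (a subset of Z). The state value ? is None, 0/1 are Some False / Some True.\<close>

type_synonym 'a state = "('a \<times> 'a) \<Rightarrow> bool option"
type_synonym 'a realization = "'a \<Rightarrow> 'a state"
type_synonym 'a partial_realization = "'a \<rightharpoonup> 'a state"

definition live_prob :: "('a \<times> 'a) set \<Rightarrow> ('a \<times> 'a \<Rightarrow> real) \<Rightarrow> ('a \<times> 'a) set \<Rightarrow> real" where
  "live_prob Z p X = (\<Prod>z\<in>Z. if z \<in> X then p z else 1 - p z)"

definition realization_of :: "('a \<times> 'a) set \<Rightarrow> ('a \<times> 'a) set \<Rightarrow> 'a realization" where
  "realization_of Z X = (\<lambda>u (w, v). if (w, v) \<in> Z \<and> (u, w) \<in> X\<^sup>* then Some ((w, v) \<in> X) else None)"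

definition prior :: "('a \<times> 'a) set \<Rightarrow> ('a \<times> 'a \<Rightarrow> real) \<Rightarrow> 'a realization \<Rightarrow> real" where
  "prior Z p \<phi> = (\<Sum>X\<in>Pow Z. if realization_of Z X = \<phi> then live_prob Z p X else 0)"

definition support_realizations :: "('a \<times> 'a) set \<Rightarrow> ('a \<times> 'a \<Rightarrow> real) \<Rightarrow> 'a realization set" where
  "support_realizations Z p = {\<phi>. prior Z p \<phi> > 0}"

definition consistent :: "'a realization \<Rightarrow> 'a partial_realization \<Rightarrow> bool" where
  "consistent \<phi> \<psi> \<longleftrightarrow> \<psi> \<subseteq>\<^sub>m (Some \<circ> \<phi>)"

definition prob_consistent :: "('a \<times> 'a) set \<Rightarrow> ('a \<times> 'a \<Rightarrow> real) \<Rightarrow> 'a partial_realization \<Rightarrow> real" where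
  "prob_consistent Z p \<psi> =
     (\<Sum>X\<in>Pow Z. if consistent (realization_of Z X) \<psi> then live_prob Z p X else 0)"

definition cond_prior :: "('a \<times> 'a) set \<Rightarrow> ('a \<times> 'a \<Rightarrow> real) \<Rightarrow> 'a realization \<Rightarrow> 'a partial_realization \<Rightarrow> real" where
  "cond_prior Z p \<phi> \<psi> =
     (if consistent \<phi> \<psi> then prior Z p \<phi> / prob_consistent Z p \<psi> else 0)"

definition admissible :: "'a set \<Rightarrow> ('a \<times> 'a) set \<Rightarrow> ('a \<times> 'a \<Rightarrow> real) \<Rightarrow> 'a partial_realization \<Rightarrow> bool" where
  "admissible E Z p \<psi> \<longleftrightarrow> dom \<psi> \<subseteq> E \<and> prob_consistent Z p \<psi> > 0"

definition cond_util :: "('a \<times> 'a) set \<Rightarrow> ('a \<times> 'a \<Rightarrow> real) \<Rightarrow> ('a set \<Rightarrow> 'a realization \<Rightarrow> real)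
    \<Rightarrow> 'a set \<Rightarrow> 'a partial_realization \<Rightarrow> real" where
  "cond_util Z p f S \<psi> =
     (\<Sum>X\<in>Pow Z. if consistent (realization_of Z X) \<psi>
                  then live_prob Z p X * f S (realization_of Z X) else 0) / prob_consistent Z p \<psi>"

definition possible_states :: "('a \<times> 'a) set \<Rightarrow> ('a \<times> 'a \<Rightarrow> real) \<Rightarrow> 'a \<Rightarrow> 'a partial_realization \<Rightarrow> 'a state set" where
  "possible_states Z p e \<psi> = {\<phi> e | \<phi>. cond_prior Z p \<phi> \<psi> > 0}"

definition wc_gain :: "('a \<times> 'a) set \<Rightarrow> ('a \<times> 'a \<Rightarrow> real) \<Rightarrow> ('a set \<Rightarrow> 'a realization \<Rightarrow> real)
    \<Rightarrow> 'a \<Rightarrow> 'a partial_realization \<Rightarrow> real" where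
  "wc_gain Z p f e \<psi> =
     Min ((\<lambda>st. cond_util Z p f (dom \<psi> \<union> {e}) (\<psi>(e \<mapsto> st)) - cond_util Z p f (dom \<psi>) \<psi>)
          ` possible_states Z p e \<psi>)"

definition wc_monotone :: "'a set \<Rightarrow> ('a \<times> 'a) set \<Rightarrow> ('a \<times> 'a \<Rightarrow> real)
    \<Rightarrow> ('a set \<Rightarrow> 'a realization \<Rightarrow> real) \<Rightarrow> bool" where
  "wc_monotone E Z p f \<longleftrightarrow>
     (\<forall>\<psi> e. admissible E Z p \<psi> \<and> e \<in> E \<and> e \<notin> dom \<psi> \<longrightarrow> wc_gain Z p f e \<psi> \<ge> 0)"

definition wc_submodular :: "'a set \<Rightarrow> ('a \<times> 'a) set \<Rightarrow> ('a \<times> 'a \<Rightarrow> real)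
    \<Rightarrow> ('a set \<Rightarrow> 'a realization \<Rightarrow> real) \<Rightarrow> bool" where
  "wc_submodular E Z p f \<longleftrightarrow>
     (\<forall>\<psi> \<psi>' e. admissible E Z p \<psi> \<and> admissible E Z p \<psi>' \<and> \<psi> \<subseteq>\<^sub>m \<psi>' \<and>
        e \<in> E \<and> e \<notin> dom \<psi>' \<longrightarrow> wc_gain Z p f e \<psi> \<ge> wc_gain Z p f e \<psi>')"

definition minimal_dependency :: "'a set \<Rightarrow> ('a \<times> 'a) set \<Rightarrow> ('a \<times> 'a \<Rightarrow> real)
    \<Rightarrow> ('a set \<Rightarrow> 'a realization \<Rightarrow> real) \<Rightarrow> bool" where
  "minimal_dependency E Z p f \<longleftrightarrow>
     (\<forall>\<psi> \<phi>. admissible E Z p \<psi> \<and> \<phi> \<in> support_realizations Z p \<and> consistent \<phi> \<psi> \<longrightarrow>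
        cond_util Z p f (dom \<psi>) \<psi> = f (dom \<psi>) \<phi>)"

definition ic_util :: "'a set \<Rightarrow> 'a set \<Rightarrow> 'a realization \<Rightarrow> real" where
  "ic_util E S \<phi> = real (card {v \<in> E. \<exists>u\<in>S. \<exists>w\<in>E. \<phi> u (w, v) = Some True}) + real (card S)"

end

theory Submission
  imports Defs
begin

definition cov :: "'a set \<Rightarrow> 'a partial_realization \<Rightarrow> 'a set" where
  "cov E \<psi> = {v\<in>E. \<exists>u s. \<psi> u = Some s \<and> (\<exists>w\<in>E. s (w,v) = Some True)}"

definition newc :: "'a set \<Rightarrow> 'a state \<Rightarrow> 'a set" where
  "newc E st = {v\<in>E. \<exists>w\<in>E. st (w,v) = Some True}"

lemma cond_util_const:
  assumes "prob_consistent Z p \<psi> \<noteq> 0"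
    and "\<forall>X\<in>Pow Z. consistent (realization_of Z X) \<psi> \<longrightarrow> F S (realization_of Z X) = c"
  shows "cond_util Z p F S \<psi> = c"
proof -
  have "(\<Sum>X\<in>Pow Z. if consistent (realization_of Z X) \<psi> then live_prob Z p X * F S (realization_of Z X) else 0)
     = (\<Sum>X\<in>Pow Z. (if consistent (realization_of Z X) \<psi> then live_prob Z p X else 0) * c)"
    by (rule sum.cong) (auto simp: assms(2))
  also have "\<dots> = prob_consistent Z p \<psi> * c" by (simp add: prob_consistent_def sum_distrib_right)
  finally show ?thesis using assms(1) by (simp add: cond_util_def)
qed

lemma ic_util_cons:
  assumes "consistent \<phi> \<psi>"
  shows "ic_util E (dom \<psi>) \<phi> = real (card (cov E \<psi>)) + real (card (dom \<psi>))"
proof -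
  have "{v \<in> E. \<exists>u\<in>dom \<psi>. \<exists>w\<in>E. \<phi> u (w, v) = Some True} = cov E \<psi>"
  proof (intro equalityI subsetI)
    fix v assume "v \<in> {v \<in> E. \<exists>u\<in>dom \<psi>. \<exists>w\<in>E. \<phi> u (w, v) = Some True}"
    then obtain u w where "v \<in> E" "u \<in> dom \<psi>" "w \<in> E" "\<phi> u (w, v) = Some True" by blast
    moreover have "\<psi> u = Some (\<phi> u)" using assms \<open>u \<in> dom \<psi>\<close> unfolding consistent_def map_le_def by auto
    ultimately show "v \<in> cov E \<psi>" unfolding cov_def by blast
  next
    fix v assume "v \<in> cov E \<psi>"
    then obtain u s w where "v \<in> E" "\<psi> u = Some s" "w \<in> E" "s (w,v) = Some True" unfolding cov_def by blast
    moreover have "s = \<phi> u" using assms \<open>\<psi> u = Some s\<close> unfolding consistent_def map_le_def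
      by (metis comp_apply domI option.inject)
    ultimately show "v \<in> {v \<in> E. \<exists>u\<in>dom \<psi>. \<exists>w\<in>E. \<phi> u (w, v) = Some True}" by blast
  qed
  then show ?thesis by (simp add: ic_util_def)
qed

lemma cond_util_ic:
  assumes "prob_consistent Z p \<psi> \<noteq> 0"
  shows "cond_util Z p (ic_util E) (dom \<psi>) \<psi> = real (card (cov E \<psi>)) + real (card (dom \<psi>))"
  by (rule cond_util_const[OF assms]) (auto simp: ic_util_cons)

lemma live_nonneg:
  assumes "\<forall>z\<in>Z. 0 \<le> p z \<and> p z \<le> 1"
  shows "0 \<le> live_prob Z p X"
  unfolding live_prob_def by (rule prod_nonneg) (use assms in auto)

lemma live_pos_iff:
  assumes "finite Z" "\<forall>z\<in>Z. 0 \<le> p z \<and> p z \<le> 1"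
  shows "live_prob Z p X > 0 \<longleftrightarrow> (\<forall>z\<in>Z. (if z\<in>X then p z else 1 - p z) \<noteq> 0)"
proof -
  have "live_prob Z p X = 0 \<longleftrightarrow> (\<exists>z\<in>Z. (if z\<in>X then p z else 1 - p z) = 0)"
    unfolding live_prob_def using assms(1) by (rule prod_zero_iff)
  moreover have "0 \<le> live_prob Z p X" using live_nonneg[OF assms(2), of X] .
  ultimately show ?thesis by (metis order_less_le)
qed

lemma exists_pos:
  assumes "0 < (\<Sum>X\<in>A. if P X then (g X::real) else 0)"
  shows "\<exists>X\<in>A. P X \<and> 0 < g X"
proof (rule ccontr)
  assume "\<not> ?thesis"
  then have "\<forall>X\<in>A. (if P X then g X else 0) \<le> 0" by auto
  then have "(\<Sum>X\<in>A. if P X then g X else 0) \<le> 0" by (meson sum_nonpos)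
  with assms show False by simp
qed

lemma sum_ge_term:
  assumes "finite A" "X \<in> A" "P X" "\<forall>Y\<in>A. 0 \<le> (g Y::real)"
  shows "g X \<le> (\<Sum>Y\<in>A. if P Y then g Y else 0)"
proof -
  have "(if P X then g X else 0) \<le> (\<Sum>Y\<in>A. if P Y then g Y else 0)"
    by (rule member_le_sum) (use assms in auto)
  with assms(3) show ?thesis by simp
qed

lemma real_true:
  "realization_of Z X u (w,v) = Some True \<longleftrightarrow> (w,v) \<in> Z \<and> (u,w) \<in> X\<^sup>* \<and> (w,v) \<in> X"
  by (auto simp: realization_of_def)

lemma cons_upd: "consistent \<phi> \<psi> \<Longrightarrow> consistent \<phi> (\<psi>(e \<mapsto> \<phi> e))"
  unfolding consistent_def map_le_def by auto

lemma pc_nonneg: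
  assumes "\<forall>z\<in>Z. 0 \<le> p z \<and> p z \<le> 1"
  shows "0 \<le> prob_consistent Z p \<psi>"
  unfolding prob_consistent_def by (rule sum_nonneg) (simp add: live_nonneg[OF assms])

lemma ps_char:
  assumes "\<forall>z\<in>Z. 0 \<le> p z \<and> p z \<le> 1" "st \<in> possible_states Z p e \<psi>"
  shows "\<exists>X\<in>Pow Z. live_prob Z p X > 0 \<and> consistent (realization_of Z X) \<psi> \<and> st = realization_of Z X e"
proof -
  obtain \<phi> where st: "st = \<phi> e" and cp: "cond_prior Z p \<phi> \<psi> > 0"
    using assms(2) unfolding possible_states_def by blast
  have c: "consistent \<phi> \<psi>" using cp unfolding cond_prior_def by (auto split: if_splits)
  have "prior Z p \<phi> / prob_consistent Z p \<psi> > 0" using cp c unfolding cond_prior_def by simp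
  moreover have "0 \<le> prob_consistent Z p \<psi>" by (rule pc_nonneg[OF assms(1)])
  ultimately have "prior Z p \<phi> > 0"
    by (simp add: zero_less_divide_iff)
  then have "0 < (\<Sum>X\<in>Pow Z. if realization_of Z X = \<phi> then live_prob Z p X else 0)"
    unfolding prior_def .
  from exists_pos[OF this] obtain X where "X \<in> Pow Z" "realization_of Z X = \<phi>" "live_prob Z p X > 0"
    by blast
  with c st show ?thesis by blast
qed

lemma pc_pos:
  assumes "finite Z" "\<forall>z\<in>Z. 0 \<le> p z \<and> p z \<le> 1" "X \<in> Pow Z" "live_prob Z p X > 0"
    "consistent (realization_of Z X) \<psi>"
  shows "prob_consistent Z p \<psi> > 0"
proof -
  have "live_prob Z p X \<le> prob_consistent Z p \<psi>"
    unfolding prob_consistent_def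
    by (rule sum_ge_term[where P="\<lambda>Y. consistent (realization_of Z Y) \<psi>"])
       (simp_all add: assms(1,3,5) live_nonneg[OF assms(2)] assms(3)[unfolded Pow_iff])
  with assms(4) show ?thesis by simp
qed

lemma in_ps:
  assumes "finite Z" "\<forall>z\<in>Z. 0 \<le> p z \<and> p z \<le> 1" "X \<in> Pow Z" "live_prob Z p X > 0"
    "consistent (realization_of Z X) \<psi>"
  shows "realization_of Z X e \<in> possible_states Z p e \<psi>"
proof -
  have "live_prob Z p X \<le> prior Z p (realization_of Z X)"
    unfolding prior_def
    by (rule sum_ge_term[where P="\<lambda>Y. realization_of Z Y = realization_of Z X"])
       (simp_all add: assms(1,3) live_nonneg[OF assms(2)] assms(3)[unfolded Pow_iff])
  then have "prior Z p (realization_of Z X) > 0" using assms(4) by simp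
  moreover have "prob_consistent Z p \<psi> > 0" by (rule pc_pos[OF assms])
  ultimately have "cond_prior Z p (realization_of Z X) \<psi> > 0"
    using assms(5) unfolding cond_prior_def by simp
  then show ?thesis unfolding possible_states_def by blast
qed

lemma ps_finite:
  assumes "finite Z" "\<forall>z\<in>Z. 0 \<le> p z \<and> p z \<le> 1"
  shows "finite (possible_states Z p e \<psi>)"
proof -
  have "possible_states Z p e \<psi> \<subseteq> (\<lambda>X. realization_of Z X e) ` Pow Z"
    using ps_char[OF assms(2)] by blast
  moreover have "finite ((\<lambda>X. realization_of Z X e) ` Pow Z)" using assms(1) by simp
  ultimately show ?thesis by (rule finite_subset)
qed

lemma ps_nonempty:
  assumes "finite Z" "\<forall>z\<in>Z. 0 \<le> p z \<and> p z \<le> 1" "prob_consistent Z p \<psi> > 0"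
  shows "possible_states Z p e \<psi> \<noteq> {}"
proof -
  have "0 < (\<Sum>X\<in>Pow Z. if consistent (realization_of Z X) \<psi> then live_prob Z p X else 0)"
    using assms(3) unfolding prob_consistent_def .
  from exists_pos[OF this] obtain X where X: "X \<in> Pow Z" "consistent (realization_of Z X) \<psi>" "live_prob Z p X > 0"
    by blast
  from in_ps[OF assms(1,2) X(1) X(3) X(2)] show ?thesis by blast
qed

lemma gain_val:
  assumes "finite E" "finite Z" "\<forall>z\<in>Z. 0 \<le> p z \<and> p z \<le> 1" "dom \<psi> \<subseteq> E" "e \<notin> dom \<psi>"
    "st \<in> possible_states Z p e \<psi>"
  shows "cond_util Z p (ic_util E) (dom \<psi> \<union> {e}) (\<psi>(e \<mapsto> st)) - cond_util Z p (ic_util E) (dom \<psi>) \<psi>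
     = real (card (newc E st - cov E \<psi>)) + 1"
proof -
  obtain X where X: "X \<in> Pow Z" "live_prob Z p X > 0" "consistent (realization_of Z X) \<psi>"
    "st = realization_of Z X e" using ps_char[OF assms(3,6)] by blast
  have pc1: "prob_consistent Z p \<psi> \<noteq> 0" using pc_pos[OF assms(2,3) X(1,2,3)] by simp
  have pc2: "prob_consistent Z p (\<psi>(e \<mapsto> st)) \<noteq> 0"
    using pc_pos[OF assms(2,3) X(1,2) cons_upd[OF X(3), of e]] X(4) by simp
  have d: "dom \<psi> \<union> {e} = dom (\<psi>(e \<mapsto> st))" by auto
  have cv: "cov E (\<psi>(e \<mapsto> st)) = cov E \<psi> \<union> newc E st"
    using assms(5) unfolding cov_def newc_def
    by (auto simp: domIff split: if_splits) (metis option.distinct(1))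
  have fd: "finite (dom \<psi>)" using assms(1,4) finite_subset by blast
  have fc: "finite (cov E \<psi>)" "finite (newc E st)" using assms(1) unfolding cov_def newc_def by auto
  have "card (cov E \<psi> \<union> newc E st) = card (cov E \<psi>) + card (newc E st - cov E \<psi>)"
  proof -
    have "cov E \<psi> \<union> newc E st = cov E \<psi> \<union> (newc E st - cov E \<psi>)" by blast
    moreover have "card (cov E \<psi> \<union> (newc E st - cov E \<psi>)) = card (cov E \<psi>) + card (newc E st - cov E \<psi>)"
      by (rule card_Un_disjoint) (use fc in auto)
    ultimately show ?thesis by simp
  qed
  moreover have "card (dom (\<psi>(e \<mapsto> st))) = card (dom \<psi>) + 1" using fd assms(5) by simp
  ultimately show ?thesis
    unfolding d cond_util_ic[OF pc1] cond_util_ic[OF pc2] cv by simp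
qed

lemma path_split:
  assumes "(e, w) \<in> X'\<^sup>*" "X' = {z\<in>X''. fst z \<in> K} \<union> {z\<in>X. fst z \<notin> K}"
    "\<forall>y w. y \<in> K \<longrightarrow> (y, w) \<in> X'' \<longrightarrow> w \<in> K"
  shows "(e, w) \<in> X\<^sup>* \<or> w \<in> K"
  using assms(1)
proof (induction rule: rtrancl_induct)
  case base then show ?case by simp
next
  case (step y z)
  then show ?case using assms(2,3)
    by (auto intro: rtrancl_into_rtrancl)
qed

lemma reach_agree1:
  assumes "(u, w) \<in> X'\<^sup>*" "u \<in> K" "X' = {z\<in>X''. fst z \<in> K} \<union> {z\<in>X. fst z \<notin> K}"
    "\<forall>y w. y \<in> K \<longrightarrow> (y, w) \<in> X'' \<longrightarrow> w \<in> K"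
  shows "(u, w) \<in> X''\<^sup>* \<and> w \<in> K"
  using assms(1)
proof (induction rule: rtrancl_induct)
  case base then show ?case using assms(2) by simp
next
  case (step y z)
  then show ?case using assms(3,4) by (auto intro: rtrancl_into_rtrancl)
qed

lemma reach_agree2:
  assumes "(u, w) \<in> X''\<^sup>*" "u \<in> K" "X' = {z\<in>X''. fst z \<in> K} \<union> {z\<in>X. fst z \<notin> K}"
    "\<forall>y w. y \<in> K \<longrightarrow> (y, w) \<in> X'' \<longrightarrow> w \<in> K"
  shows "(u, w) \<in> X'\<^sup>* \<and> w \<in> K"
  using assms(1)
proof (induction rule: rtrancl_induct)
  case base then show ?case using assms(2) by simp
next
  case (step y z)
  then show ?case using assms(3,4) by (auto intro: rtrancl_into_rtrancl)
qed

lemma cov_mono: "\<psi> \<subseteq>\<^sub>m \<psi>' \<Longrightarrow> cov E \<psi> \<subseteq> cov E \<psi>'"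
  unfolding cov_def map_le_def by (auto simp: dom_def) (metis option.distinct(1))

lemma wc_gain_eq:
  assumes "finite E" "finite Z" "\<forall>z\<in>Z. 0 \<le> p z \<and> p z \<le> 1" "dom \<psi> \<subseteq> E" "e \<notin> dom \<psi>"
  shows "wc_gain Z p (ic_util E) e \<psi>
     = Min ((\<lambda>st. real (card (newc E st - cov E \<psi>)) + 1) ` possible_states Z p e \<psi>)"
  unfolding wc_gain_def using gain_val[OF assms] by (intro arg_cong[where f=Min] image_cong) auto

theorem proposition3:
  fixes E :: "'a set" and Z :: "('a \<times> 'a) set" and p :: "'a \<times> 'a \<Rightarrow> real"
  assumes "finite E"
    and "Z \<subseteq> E \<times> E"
    and "\<forall>z\<in>Z. 0 \<le> p z \<and> p z \<le> 1"
  shows "wc_monotone E Z p (ic_util E) \<and> wc_submodular E Z p (ic_util E)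
         \<and> minimal_dependency E Z p (ic_util E)"
proof (intro conjI)
  have fZ: "finite Z" using assms(1,2) by (meson finite_SigmaI finite_subset)
  note pa = assms(3)
  show "wc_monotone E Z p (ic_util E)"
    unfolding wc_monotone_def
  proof (intro allI impI)
    fix \<psi> e assume h: "admissible E Z p \<psi> \<and> e \<in> E \<and> e \<notin> dom \<psi>"
    then have d: "dom \<psi> \<subseteq> E" "prob_consistent Z p \<psi> > 0" unfolding admissible_def by auto
    have e: "e \<notin> dom \<psi>" using h by blast
    have "0 \<le> Min ((\<lambda>st. real (card (newc E st - cov E \<psi>)) + 1) ` possible_states Z p e \<psi>)"
      using ps_finite[OF fZ pa, of e \<psi>] ps_nonempty[OF fZ pa d(2), of e]
      by (subst Min_ge_iff) auto
    then show "0 \<le> wc_gain Z p (ic_util E) e \<psi>"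
      unfolding wc_gain_eq[OF assms(1) fZ pa d(1) e] .
  qed
  show "minimal_dependency E Z p (ic_util E)"
    unfolding minimal_dependency_def
  proof (intro allI impI)
    fix \<psi> \<phi> assume h: "admissible E Z p \<psi> \<and> \<phi> \<in> support_realizations Z p \<and> consistent \<phi> \<psi>"
    then have "prob_consistent Z p \<psi> \<noteq> 0" unfolding admissible_def by auto
    then show "cond_util Z p (ic_util E) (dom \<psi>) \<psi> = ic_util E (dom \<psi>) \<phi>"
      using cond_util_ic ic_util_cons h by metis
  qed
  show "wc_submodular E Z p (ic_util E)"
    unfolding wc_submodular_def
  proof (intro allI impI)
    fix \<psi> \<psi>' e
    assume h: "admissible E Z p \<psi> \<and> admissible E Z p \<psi>' \<and> \<psi> \<subseteq>\<^sub>m \<psi>' \<and> e \<in> E \<and> e \<notin> dom \<psi>'"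
    then have le: "\<psi> \<subseteq>\<^sub>m \<psi>'" and e': "e \<notin> dom \<psi>'" by auto
    have e: "e \<notin> dom \<psi>" using e' le map_le_implies_dom_le by blast
    have d: "dom \<psi> \<subseteq> E" "prob_consistent Z p \<psi> > 0" using h unfolding admissible_def by auto
    have d': "dom \<psi>' \<subseteq> E" "prob_consistent Z p \<psi>' > 0" using h unfolding admissible_def by auto
    define V where "V = (\<lambda>\<psi> st. real (card (newc E st - cov E \<psi>)) + 1)"
    have g1: "wc_gain Z p (ic_util E) e \<psi> = Min (V \<psi> ` possible_states Z p e \<psi>)"
      unfolding V_def by (rule wc_gain_eq[OF assms(1) fZ pa d(1) e])
    have g2: "wc_gain Z p (ic_util E) e \<psi>' = Min (V \<psi>' ` possible_states Z p e \<psi>')"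
      unfolding V_def by (rule wc_gain_eq[OF assms(1) fZ pa d'(1) e'])
    have "Min (V \<psi> ` possible_states Z p e \<psi>) \<in> V \<psi> ` possible_states Z p e \<psi>"
      using ps_finite[OF fZ pa] ps_nonempty[OF fZ pa d(2)] by (intro Min_in) auto
    then obtain st0 where st0: "st0 \<in> possible_states Z p e \<psi>"
      and m0: "Min (V \<psi> ` possible_states Z p e \<psi>) = V \<psi> st0" by auto
    obtain X where X: "X \<in> Pow Z" "live_prob Z p X > 0" "consistent (realization_of Z X) \<psi>"
      "st0 = realization_of Z X e" using ps_char[OF pa st0] by blast
    have "0 < (\<Sum>X\<in>Pow Z. if consistent (realization_of Z X) \<psi>' then live_prob Z p X else 0)"
      using d'(2) unfolding prob_consistent_def .
    from exists_pos[OF this] obtain X'' where X'': "X'' \<in> Pow Z" "consistent (realization_of Z X'') \<psi>'" "live_prob Z p X'' > 0"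
      by blast
    define K where "K = {w. \<exists>u\<in>dom \<psi>'. (u, w) \<in> X''\<^sup>*}"
    define X' where "X' = {z\<in>X''. fst z \<in> K} \<union> {z\<in>X. fst z \<notin> K}"
    have Kc: "\<forall>y w. y \<in> K \<longrightarrow> (y, w) \<in> X'' \<longrightarrow> w \<in> K"
      unfolding K_def by (auto intro: rtrancl_into_rtrancl)
    have X'Z: "X' \<in> Pow Z" using X(1) X''(1) unfolding X'_def by auto
    have lp: "live_prob Z p X' > 0"
      using X(2) X''(3) unfolding live_pos_iff[OF fZ pa] X'_def by auto
    have psi'u: "\<psi>' u = Some (realization_of Z X'' u)" if "u \<in> dom \<psi>'" for u
      using X''(2) that unfolding consistent_def map_le_def by auto
    have ragree: "realization_of Z X' u = realization_of Z X'' u" if "u \<in> dom \<psi>'" for u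
    proof -
      have uK: "u \<in> K" using that unfolding K_def by blast
      have r: "(u, w) \<in> X'\<^sup>* \<longleftrightarrow> (u, w) \<in> X''\<^sup>*" for w
        using reach_agree1[OF _ uK X'_def Kc] reach_agree2[OF _ uK X'_def Kc] by blast
      have x: "(w, v) \<in> X' \<longleftrightarrow> (w, v) \<in> X''" if "(u, w) \<in> X''\<^sup>*" for w v
        using reach_agree2[OF that uK X'_def Kc] unfolding X'_def by auto
      show ?thesis unfolding realization_of_def using r x by (auto simp: fun_eq_iff)
    qed
    have cons': "consistent (realization_of Z X') \<psi>'"
      unfolding consistent_def map_le_def using psi'u ragree by auto
    have st'ps: "realization_of Z X' e \<in> possible_states Z p e \<psi>'"
      by (rule in_ps[OF fZ pa X'Z lp cons'])
    have sub: "newc E (realization_of Z X' e) - cov E \<psi>' \<subseteq> newc E st0 - cov E \<psi>"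
    proof
      fix v assume v: "v \<in> newc E (realization_of Z X' e) - cov E \<psi>'"
      then obtain w where w: "v \<in> E" "w \<in> E" "(w, v) \<in> Z" "(e, w) \<in> X'\<^sup>*" "(w, v) \<in> X'"
        unfolding newc_def real_true by blast
      have nc: "v \<notin> cov E \<psi>'" using v by blast
      show "v \<in> newc E st0 - cov E \<psi>"
      proof (cases "w \<in> K")
        case True
        then obtain u where u: "u \<in> dom \<psi>'" "(u, w) \<in> X''\<^sup>*" unfolding K_def by blast
        have "(w, v) \<in> X''" using w(5) True unfolding X'_def by auto
        then have "realization_of Z X'' u (w, v) = Some True" using u w(3) real_true by metis
        then have "v \<in> cov E \<psi>'" unfolding cov_def using psi'u[OF u(1)] w(1,2) by blast
        with nc show ?thesis by blast
      next
        case False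
        have "(w, v) \<in> X" using w(5) False unfolding X'_def by auto
        moreover have "(e, w) \<in> X\<^sup>*" using path_split[OF w(4) X'_def Kc] False by blast
        ultimately have "v \<in> newc E st0" unfolding X(4) newc_def real_true using w by blast
        moreover have "v \<notin> cov E \<psi>" using nc cov_mono[OF le] by blast
        ultimately show ?thesis by blast
      qed
    qed
    have "card (newc E (realization_of Z X' e) - cov E \<psi>') \<le> card (newc E st0 - cov E \<psi>)"
      by (rule card_mono[OF _ sub]) (use assms(1) in \<open>auto simp: newc_def\<close>)
    then have "V \<psi>' (realization_of Z X' e) \<le> V \<psi> st0" unfolding V_def by simp
    moreover have "Min (V \<psi>' ` possible_states Z p e \<psi>') \<le> V \<psi>' (realization_of Z X' e)"
      using ps_finite[OF fZ pa] st'ps by (intro Min_le) auto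
    ultimately show "wc_gain Z p (ic_util E) e \<psi>' \<le> wc_gain Z p (ic_util E) e \<psi>"
      unfolding g1 g2 m0 by linarith
  qed
qed

end
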